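(* Let $\succ$ be a binary relation on $\mathcal{F}$ satisfying Axioms A1–A7 below, and define $\succsim$ on $X$ by $x\succsim y$ iff $y\not\succ x$. Then for all $f\in\mathcal{F}$ and $x,y\in X$, if $f\succ x$ and $x\succsim y$, then $f\succ y$. Axioms: (A1) $\succ$ is asymmetric and transitive, and its restriction to $X$ is non-trivial and negatively transitive. (A2) For all $f,g,h\in\mathcal{F}$, $\{\alpha\in[0,1]:\alpha f+(1-\alpha)g\succ h\}$ and $\{\alpha\in[0,1]:h\succ\alpha f+(1-\alpha)g\}$ are open in $[0,1]$. (A3) For all $f,g\in\mathcal{F}$, $x\in X$, $\alpha\in(0,1)$: $f\succ g$ iff $\alpha f+(1-\alpha)x\succ\alpha g+(1-\alpha)x$. (A4) For all $x\in X$, $\{f:f\succ x\}$ and $\{f:x\succ f\}$ are convex. (A5) If $f(s)\succ g(s)$ for all $s\in S$ then $f\succ g$. (A6) If for all $x\in X$, $f\Join x$ implies $g\Join x$, then $f\Join g$. (A7) If $f\Join x$, $x\succ g$, $g\Join y$, $f\succ y$ (with $x,y\in X$), then $f\succ g$.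
   Context: $S$ is a set of states with algebra $\Sigma$; $X$ is a non-singleton convex subset of a real vector space; $\mathcal{F}$ is the set of simple acts $f:S\to X$ ($\Sigma$-measurable, finitely many values) with pointwise mixtures; elements of $X$ are identified with constant acts. $f\Join g$ means $f\not\succ g$ and $g\not\succ f$. *)

theory Defs
  imports "HOL-Analysis.Analysis"
begin

text \<open>Simple acts: Sigma-measurable maps S -> X with finitely many values.
  The state space S is the whole type 'a; Sigma is an algebra on UNIV.\<close>
definition simple_acts :: "'a set set \<Rightarrow> 'b::real_vector set \<Rightarrow> ('a \<Rightarrow> 'b) set" where
  "simple_acts \<Sigma> X = {f. range f \<subseteq> X \<and> finite (range f) \<and> (\<forall>x. f -` {x} \<in> \<Sigma>)}"

definition mix :: "real \<Rightarrow> ('a \<Rightarrow> 'b::real_vector) \<Rightarrow> ('a \<Rightarrow> 'b) \<Rightarrow> ('a \<Rightarrow> 'b)" where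
  "mix \<alpha> f g = (\<lambda>s. \<alpha> *\<^sub>R f s + (1 - \<alpha>) *\<^sub>R g s)"

definition const_act :: "'b \<Rightarrow> ('a \<Rightarrow> 'b)" where
  "const_act x = (\<lambda>_. x)"

definition incomp :: "(('a \<Rightarrow> 'b) \<Rightarrow> ('a \<Rightarrow> 'b) \<Rightarrow> bool) \<Rightarrow> ('a \<Rightarrow> 'b) \<Rightarrow> ('a \<Rightarrow> 'b) \<Rightarrow> bool" where
  "incomp P f g \<longleftrightarrow> \<not> P f g \<and> \<not> P g f"

definition A1 where
  "A1 \<Sigma> X P \<longleftrightarrow>
     (\<forall>f\<in>simple_acts \<Sigma> X. \<forall>g\<in>simple_acts \<Sigma> X. P f g \<longrightarrow> \<not> P g f) \<and>
     (\<forall>f\<in>simple_acts \<Sigma> X. \<forall>g\<in>simple_acts \<Sigma> X. \<forall>h\<in>simple_acts \<Sigma> X.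
         P f g \<and> P g h \<longrightarrow> P f h) \<and>
     (\<exists>x\<in>X. \<exists>y\<in>X. P (const_act x) (const_act y)) \<and>
     (\<forall>x\<in>X. \<forall>y\<in>X. \<forall>z\<in>X.
         \<not> P (const_act x) (const_act y) \<and> \<not> P (const_act y) (const_act z)
           \<longrightarrow> \<not> P (const_act x) (const_act z))"

definition A2 where
  "A2 \<Sigma> X P \<longleftrightarrow>
     (\<forall>f\<in>simple_acts \<Sigma> X. \<forall>g\<in>simple_acts \<Sigma> X. \<forall>h\<in>simple_acts \<Sigma> X.
        openin (top_of_set {0..1::real}) {\<alpha>\<in>{0..1}. P (mix \<alpha> f g) h} \<and>
        openin (top_of_set {0..1::real}) {\<alpha>\<in>{0..1}. P h (mix \<alpha> f g)})"

definition A3 where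
  "A3 \<Sigma> X P \<longleftrightarrow>
     (\<forall>f\<in>simple_acts \<Sigma> X. \<forall>g\<in>simple_acts \<Sigma> X. \<forall>x\<in>X. \<forall>\<alpha>\<in>{0<..<1::real}.
        P f g \<longleftrightarrow> P (mix \<alpha> f (const_act x)) (mix \<alpha> g (const_act x)))"

definition convex_acts :: "('a \<Rightarrow> 'b::real_vector) set \<Rightarrow> bool" where
  "convex_acts A \<longleftrightarrow> (\<forall>f\<in>A. \<forall>g\<in>A. \<forall>\<alpha>\<in>{0..1::real}. mix \<alpha> f g \<in> A)"

definition A4 where
  "A4 \<Sigma> X P \<longleftrightarrow>
     (\<forall>x\<in>X. convex_acts {f\<in>simple_acts \<Sigma> X. P f (const_act x)} \<and>
             convex_acts {f\<in>simple_acts \<Sigma> X. P (const_act x) f})"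

definition A5 where
  "A5 \<Sigma> X P \<longleftrightarrow>
     (\<forall>f\<in>simple_acts \<Sigma> X. \<forall>g\<in>simple_acts \<Sigma> X.
        (\<forall>s. P (const_act (f s)) (const_act (g s))) \<longrightarrow> P f g)"

definition A6 where
  "A6 \<Sigma> X P \<longleftrightarrow>
     (\<forall>f\<in>simple_acts \<Sigma> X. \<forall>g\<in>simple_acts \<Sigma> X.
        (\<forall>x\<in>X. incomp P f (const_act x) \<longrightarrow> incomp P g (const_act x)) \<longrightarrow> incomp P f g)"

definition A7 where
  "A7 \<Sigma> X P \<longleftrightarrow>
     (\<forall>f\<in>simple_acts \<Sigma> X. \<forall>g\<in>simple_acts \<Sigma> X. \<forall>x\<in>X. \<forall>y\<in>X.
        incomp P f (const_act x) \<and> P (const_act x) g \<and> incomp P g (const_act y) \<and> P f (const_act y)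
          \<longrightarrow> P f g)"

definition weak_pref where
  "weak_pref P x y \<longleftrightarrow> \<not> P (const_act y) (const_act x)"

end

theory Submission
  imports Defs
begin

lemma const_in_simple:
  assumes "algebra UNIV \<Sigma>" and "z \<in> X"
  shows "const_act z \<in> simple_acts \<Sigma> X"
proof -
  have "\<forall>w. (const_act z :: 'a \<Rightarrow> 'b) -` {w} \<in> \<Sigma>"
  proof
    fix w
    show "(const_act z :: 'a \<Rightarrow> 'b) -` {w} \<in> \<Sigma>"
    proof (cases "w = z")
      case True
      then have "(const_act z :: 'a \<Rightarrow> 'b) -` {w} = UNIV" by (auto simp: const_act_def)
      then show ?thesis using assms(1) by (simp add: algebra.top)
    next
      case False
      then have "(const_act z :: 'a \<Rightarrow> 'b) -` {w} = {}" by (auto simp: const_act_def)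
      then show ?thesis using assms(1) by (metis algebra.axioms(1) ring_of_sets.axioms(1) semiring_of_sets.empty_sets)
    qed
  qed
  moreover have "range (const_act z :: 'a \<Rightarrow> 'b) = {z}" by (auto simp: const_act_def)
  ultimately show ?thesis using assms(2) by (simp add: simple_acts_def)
qed

theorem lemma3:
  fixes \<Sigma> :: "'a set set" and X :: "'b::real_vector set"
    and P :: "('a \<Rightarrow> 'b) \<Rightarrow> ('a \<Rightarrow> 'b) \<Rightarrow> bool"
  assumes "algebra UNIV \<Sigma>"
    and "convex X" and "\<exists>x\<in>X. \<exists>y\<in>X. x \<noteq> y"
    and "A1 \<Sigma> X P" and "A2 \<Sigma> X P" and "A3 \<Sigma> X P" and "A4 \<Sigma> X P"
    and "A5 \<Sigma> X P" and "A6 \<Sigma> X P" and "A7 \<Sigma> X P"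
    and "f \<in> simple_acts \<Sigma> X" and "x \<in> X" and "y \<in> X"
    and "P f (const_act x)" and "weak_pref P x y"
  shows "P f (const_act y)"
proof -
  have cx: "const_act x \<in> simple_acts \<Sigma> X" using const_in_simple assms(1,12) by blast
  have cy: "const_act y \<in> simple_acts \<Sigma> X" using const_in_simple assms(1,13) by blast
  have trans: "\<And>a b c. a \<in> simple_acts \<Sigma> X \<Longrightarrow> b \<in> simple_acts \<Sigma> X \<Longrightarrow> c \<in> simple_acts \<Sigma> X
      \<Longrightarrow> P a b \<Longrightarrow> P b c \<Longrightarrow> P a c" using assms(4) unfolding A1_def by blast
  have nyx: "\<not> P (const_act y) (const_act x)" using assms(15) by (simp add: weak_pref_def)
  show ?thesis
  proof (cases "P (const_act x) (const_act y)")
    case True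
    then show ?thesis using trans[OF assms(11) cx cy assms(14)] by blast
  next
    case False
    have "\<not> incomp P f (const_act x)" using assms(14) by (simp add: incomp_def)
    then obtain z where z: "z \<in> X" "incomp P f (const_act z)" "\<not> incomp P (const_act x) (const_act z)"
      using assms(6,9,11) cx unfolding A6_def by blast
    have cz: "const_act z \<in> simple_acts \<Sigma> X" using const_in_simple assms(1) z(1) by blast
    have "\<not> P (const_act x) (const_act z)"
      using trans[OF assms(11) cx cz assms(14)] z(2) by (auto simp: incomp_def)
    then have pzx: "P (const_act z) (const_act x)" using z(3) by (simp add: incomp_def)
    have pzy: "P (const_act z) (const_act y)"
      using assms(4) z(1) assms(12,13) nyx pzx unfolding A1_def by blast
    have "incomp P (const_act y) (const_act x)" using False nyx by (simp add: incomp_def)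
    then show ?thesis using assms(10,11,12,14) cy z pzy unfolding A7_def by blast
  qed
qed

end
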